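(* Let $G$ be a simple dimension group with exactly $n>1$ pure (extremal) normalized traces. If either $\operatorname{rank}(G/\mathrm{Inf}(G))=n$, or $\operatorname{rank}(G/\mathrm{Inf}(G))=n+1$ and $G/\mathrm{Inf}(G)$ is finitely generated, then $G$ is globally irrationally miscible.
   Context: A dimension group is an unperforated partially ordered abelian group with the Riesz interpolation property; simple means no nontrivial order ideals. For an order unit $u$, $S(G,u)$ is the compact convex set of states (homomorphisms $\sigma:G\to\mathbb R$, $\sigma(G^+)\ge0$, $\sigma(u)=1$), and pure traces are its extreme points. $\mathrm{Inf}(G)=\{g:-\epsilon u\le g\le\epsilon u\ \forall\epsilon\in\mathbb Q_{>0}\}$. $\operatorname{rank}H=\dim_{\mathbb Q}(H\otimes\mathbb Q)$. $J(G,u)=\{g:\sigma\mapsto\sigma(g)\text{ constant on }S(G,u)\}$ with $\Phi(g)$ the constant; $(G,u)$ is irrationally miscible if $\Phi(J(G,u))\subseteq\mathbb Q$, and $G$ is globally irrationally miscible if this holds for all order units $u$. *)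

theory Defs
  imports Main "HOL.Rat" "HOL.Real"
begin

text \<open>A partially ordered abelian group is modelled as a type of class ab_group_add
  (the whole type is the group G) together with its positive cone P = G+.
  We write a \<le>P b for b - a in P.\<close>

primrec nsmul :: "nat \<Rightarrow> 'g::ab_group_add \<Rightarrow> 'g" where
  "nsmul 0 g = 0"
| "nsmul (Suc n) g = g + nsmul n g"

definition zsmul :: "int \<Rightarrow> 'g::ab_group_add \<Rightarrow> 'g" where
  "zsmul k g = (if k \<ge> 0 then nsmul (nat k) g else - nsmul (nat (- k)) g)"

definition pleq :: "'g::ab_group_add set \<Rightarrow> 'g \<Rightarrow> 'g \<Rightarrow> bool" where
  "pleq P a b \<longleftrightarrow> b - a \<in> P"

definition po_group :: "'g::ab_group_add set \<Rightarrow> bool" where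
  "po_group P \<longleftrightarrow> 0 \<in> P \<and> (\<forall>a\<in>P. \<forall>b\<in>P. a + b \<in> P) \<and> (\<forall>a. a \<in> P \<and> - a \<in> P \<longrightarrow> a = 0)"

definition unperforated :: "'g::ab_group_add set \<Rightarrow> bool" where
  "unperforated P \<longleftrightarrow> (\<forall>n g. n > 0 \<and> nsmul n g \<in> P \<longrightarrow> g \<in> P)"

definition riesz_interpolation :: "'g::ab_group_add set \<Rightarrow> bool" where
  "riesz_interpolation P \<longleftrightarrow>
    (\<forall>a1 a2 b1 b2. pleq P a1 b1 \<and> pleq P a1 b2 \<and> pleq P a2 b1 \<and> pleq P a2 b2 \<longrightarrow>
       (\<exists>c. pleq P a1 c \<and> pleq P a2 c \<and> pleq P c b1 \<and> pleq P c b2))"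

definition dimension_group :: "'g::ab_group_add set \<Rightarrow> bool" where
  "dimension_group P \<longleftrightarrow> po_group P \<and> unperforated P \<and> riesz_interpolation P"

definition order_ideal :: "'g::ab_group_add set \<Rightarrow> 'g set \<Rightarrow> bool" where
  "order_ideal P I \<longleftrightarrow> 0 \<in> I \<and> (\<forall>a\<in>I. \<forall>b\<in>I. a - b \<in> I)
     \<and> (\<forall>a b. pleq P 0 a \<and> pleq P a b \<and> b \<in> I \<longrightarrow> a \<in> I)
     \<and> (\<forall>g\<in>I. \<exists>a b. a \<in> I \<inter> P \<and> b \<in> I \<inter> P \<and> g = a - b)"

definition simple_group :: "'g::ab_group_add set \<Rightarrow> bool" where
  "simple_group P \<longleftrightarrow> (\<forall>I. order_ideal P I \<longrightarrow> I = {0} \<or> I = UNIV)"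

definition order_unit :: "'g::ab_group_add set \<Rightarrow> 'g \<Rightarrow> bool" where
  "order_unit P u \<longleftrightarrow> u \<in> P \<and> (\<forall>g. \<exists>n. pleq P g (nsmul n u))"

definition states :: "'g::ab_group_add set \<Rightarrow> 'g \<Rightarrow> ('g \<Rightarrow> real) set" where
  "states P u = {\<sigma>. (\<forall>a b. \<sigma> (a + b) = \<sigma> a + \<sigma> b) \<and> (\<forall>a\<in>P. \<sigma> a \<ge> 0) \<and> \<sigma> u = 1}"

definition extreme_points :: "('g \<Rightarrow> real) set \<Rightarrow> ('g \<Rightarrow> real) set" where
  "extreme_points S = {\<sigma>\<in>S. \<forall>a\<in>S. \<forall>b\<in>S. \<forall>t::real. 0 < t \<and> t < 1 \<and>
       \<sigma> = (\<lambda>x. t * a x + (1 - t) * b x) \<longrightarrow> a = b}"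

definition pure_traces :: "'g::ab_group_add set \<Rightarrow> 'g \<Rightarrow> ('g \<Rightarrow> real) set" where
  "pure_traces P u = extreme_points (states P u)"

text \<open>Inf(G) = {g. -eps u \<le> g \<le> eps u for all rational eps > 0}; with eps = p/q this
  reads -p u \<le> q g \<le> p u.\<close>
definition infinitesimals :: "'g::ab_group_add set \<Rightarrow> 'g \<Rightarrow> 'g set" where
  "infinitesimals P u = {g. \<forall>p q::nat. p > 0 \<and> q > 0 \<longrightarrow>
      pleq P (- nsmul p u) (nsmul q g) \<and> pleq P (nsmul q g) (nsmul p u)}"

text \<open>Rank of the quotient G/I: maximal number of Z-linearly independent elements modulo I
  (= dim_Q((G/I) \<otimes> Q)). \<close>
definition indep_mod :: "'g::ab_group_add set \<Rightarrow> nat \<Rightarrow> (nat \<Rightarrow> 'g) \<Rightarrow> bool" where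
  "indep_mod I k x \<longleftrightarrow> (\<forall>m::nat \<Rightarrow> int. (\<Sum>i<k. zsmul (m i) (x i)) \<in> I \<longrightarrow> (\<forall>i<k. m i = 0))"

definition quotient_rank_eq :: "'g::ab_group_add set \<Rightarrow> nat \<Rightarrow> bool" where
  "quotient_rank_eq I k \<longleftrightarrow> (\<exists>x. indep_mod I k x) \<and> \<not> (\<exists>x. indep_mod I (Suc k) x)"

definition quotient_fin_gen :: "'g::ab_group_add set \<Rightarrow> bool" where
  "quotient_fin_gen I \<longleftrightarrow> (\<exists>F. finite F \<and> (\<forall>g. \<exists>m::'g \<Rightarrow> int. g - (\<Sum>f\<in>F. zsmul (m f) f) \<in> I))"

definition irrationally_miscible :: "'g::ab_group_add set \<Rightarrow> 'g \<Rightarrow> bool" where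
  "irrationally_miscible P u \<longleftrightarrow>
     (\<forall>g. (\<forall>\<sigma>\<in>states P u. \<forall>\<tau>\<in>states P u. \<sigma> g = \<tau> g) \<longrightarrow>
          (\<forall>\<sigma>\<in>states P u. \<sigma> g \<in> \<rat>))"

definition globally_irrationally_miscible :: "'g::ab_group_add set \<Rightarrow> bool" where
  "globally_irrationally_miscible P \<longleftrightarrow> (\<forall>u. order_unit P u \<longrightarrow> irrationally_miscible P u)"

end

theory Submission
  imports Defs
begin

definition hom :: "('g::ab_group_add \<Rightarrow> real) \<Rightarrow> bool" where
  "hom f \<longleftrightarrow> (\<forall>a b. f (a + b) = f a + f b)"

definition posh :: "'g::ab_group_add set \<Rightarrow> ('g \<Rightarrow> real) \<Rightarrow> bool" where
  "posh P f \<longleftrightarrow> hom f \<and> (\<forall>a\<in>P. 0 \<le> f a)"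

definition hle :: "'g::ab_group_add set \<Rightarrow> ('g \<Rightarrow> real) \<Rightarrow> ('g \<Rightarrow> real) \<Rightarrow> bool" where
  "hle P f g \<longleftrightarrow> (\<forall>a\<in>P. f a \<le> g a)"

lemma hom_0: "hom f \<Longrightarrow> f 0 = 0"
  unfolding hom_def by (metis add.right_neutral add_cancel_right_right)

lemma hom_minus: "hom f \<Longrightarrow> f (- a) = - f a"
  using hom_0[of f] unfolding hom_def by (metis add.right_inverse add_eq_0_iff)

lemma hom_diff: "hom f \<Longrightarrow> f (a - b) = f a - f b"
  using hom_minus[of f b] unfolding hom_def by (metis diff_conv_add_uminus diff_minus_eq_add)

lemma hom_nsmul: "hom f \<Longrightarrow> f (nsmul n a) = real n * f a"
  by (induction n) (auto simp: hom_0 hom_def algebra_simps)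

lemma hom_zsmul: "hom f \<Longrightarrow> f (zsmul k a) = real_of_int k * f a"
  by (auto simp: zsmul_def hom_nsmul hom_minus)

lemma hom_sum: "hom f \<Longrightarrow> f (\<Sum>i\<in>A. g i) = (\<Sum>i\<in>A. f (g i))"
  by (induction A rule: infinite_finite_induct) (auto simp: hom_0 hom_def)

lemma hom_lin: "(\<forall>i\<in>A. hom (h i)) \<Longrightarrow> hom (\<lambda>x. \<Sum>i\<in>A. c i * h i x)"
  unfolding hom_def by (simp add: sum.distrib[symmetric] distrib_left)

lemma hom_add: "hom f \<Longrightarrow> hom g \<Longrightarrow> hom (\<lambda>x. f x + g x)"
  unfolding hom_def by simp

lemma hom_sub: "hom f \<Longrightarrow> hom g \<Longrightarrow> hom (\<lambda>x. f x - g x)"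
  unfolding hom_def by simp

lemma hom_scale: "hom f \<Longrightarrow> hom (\<lambda>x. c * f x)"
  unfolding hom_def by (simp add: distrib_left)

lemma states_hom: "\<sigma> \<in> states P u \<Longrightarrow> hom \<sigma>"
  unfolding states_def hom_def by auto

lemma states_posh: "\<sigma> \<in> states P u \<Longrightarrow> posh P \<sigma>"
  unfolding states_def posh_def hom_def by auto

lemma pure_states: "\<sigma> \<in> pure_traces P u \<Longrightarrow> \<sigma> \<in> states P u"
  unfolding pure_traces_def extreme_points_def by auto

lemma po_add: "po_group P \<Longrightarrow> a \<in> P \<Longrightarrow> b \<in> P \<Longrightarrow> a + b \<in> P"
  unfolding po_group_def by auto

lemma po_0: "po_group P \<Longrightarrow> 0 \<in> P"
  unfolding po_group_def by auto

lemma po_antisym: "po_group P \<Longrightarrow> a \<in> P \<Longrightarrow> - a \<in> P \<Longrightarrow> a = 0"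
  unfolding po_group_def by auto

lemma nsmul_add: "nsmul (m + k) a = nsmul m a + nsmul k a"
  by (induction m) (auto simp: algebra_simps)

lemma nsmul_P: "po_group P \<Longrightarrow> a \<in> P \<Longrightarrow> nsmul n a \<in> P"
  by (induction n) (auto simp: po_add po_0)

lemma unit_bound: "order_unit P u \<Longrightarrow> \<exists>n. nsmul n u - x \<in> P"
  unfolding order_unit_def pleq_def by auto

lemma directed: "po_group P \<Longrightarrow> order_unit P u \<Longrightarrow> \<exists>p q. p \<in> P \<and> q \<in> P \<and> x = p - q"
proof -
  assume po: "po_group P" and u: "order_unit P u"
  then obtain n where n: "nsmul n u - (- x) \<in> P" using unit_bound by blast
  have "nsmul n u \<in> P" using nsmul_P[OF po] u unfolding order_unit_def by blast
  have "x = (nsmul n u - (- x)) - nsmul n u" by simp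
  thus ?thesis using n \<open>nsmul n u \<in> P\<close> by blast
qed

lemma posh_zero:
  assumes "order_unit P u" "posh P h" "h u = 0"
  shows "h x = 0"
proof -
  have hh: "hom h" using assms(2) posh_def by blast
  obtain n where n: "nsmul n u - x \<in> P" using unit_bound[OF assms(1)] by blast
  obtain k where k: "nsmul k u - (- x) \<in> P" using unit_bound[OF assms(1)] by blast
  have "0 \<le> h (nsmul n u - x)" using n assms(2) posh_def by blast
  hence 1: "h x \<le> 0" using assms(3) by (simp add: hom_diff[OF hh] hom_nsmul[OF hh])
  have "0 \<le> h (nsmul k u - (- x))" using k assms(2) posh_def by blast
  hence 2: "h x \<ge> 0" using assms(3) hh unfolding hom_def by (simp add: hom_nsmul[OF hh])
  show ?thesis using 1 2 by simp
qed


locale dgc =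
  fixes P :: "'g::ab_group_add set" and u0 :: 'g
  assumes po: "po_group P" and riesz: "riesz_interpolation P" and ou: "order_unit P u0"
begin

lemma riesz_dec:
  assumes "y \<in> P" "x1 \<in> P" "x2 \<in> P" "x1 + x2 - y \<in> P"
  shows "\<exists>y1. y1 \<in> P \<and> x1 - y1 \<in> P \<and> y - y1 \<in> P \<and> x2 - (y - y1) \<in> P"
proof -
  have "pleq P 0 y" "pleq P 0 x1" "pleq P (y - x2) y" "pleq P (y - x2) x1"
    using assms unfolding pleq_def by (auto simp: algebra_simps)
  then obtain c where c: "pleq P 0 c" "pleq P (y - x2) c" "pleq P c y" "pleq P c x1"
    using riesz unfolding riesz_interpolation_def by blast
  have eq: "x2 - (y - c) = c - (y - x2)" by (simp add: algebra_simps)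
  have "x2 - (y - c) \<in> P" unfolding eq using c(2) unfolding pleq_def by simp
  thus ?thesis using c unfolding pleq_def by (intro exI[of _ c]) auto
qed

definition mset :: "('g \<Rightarrow> real) \<Rightarrow> ('g \<Rightarrow> real) \<Rightarrow> 'g \<Rightarrow> real set" where
  "mset f g a = {f y + g (a - y) | y. y \<in> P \<and> a - y \<in> P}"

definition mm :: "('g \<Rightarrow> real) \<Rightarrow> ('g \<Rightarrow> real) \<Rightarrow> 'g \<Rightarrow> real" where
  "mm f g a = Inf (mset f g a)"

context
  fixes f g :: "'g \<Rightarrow> real"
  assumes pf: "posh P f" and pg: "posh P g"
begin

lemma hf: "hom f" using pf posh_def by blast
lemma hg: "hom g" using pg posh_def by blast

lemma mset_bdd: "bdd_below (mset f g a)"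
proof -
  have "\<forall>v\<in>mset f g a. 0 \<le> v"
    using pf pg unfolding mset_def posh_def by fastforce
  thus ?thesis by (meson bdd_below.I)
qed

lemma mset_ne: "a \<in> P \<Longrightarrow> mset f g a \<noteq> {}"
  using po_0[OF po] unfolding mset_def by fastforce

lemma mm_le: "a \<in> P \<Longrightarrow> y \<in> P \<Longrightarrow> a - y \<in> P \<Longrightarrow> mm f g a \<le> f y + g (a - y)"
  unfolding mm_def by (rule cInf_lower[OF _ mset_bdd]) (auto simp: mset_def)

lemma mm_ge: "a \<in> P \<Longrightarrow> (\<And>y. y \<in> P \<Longrightarrow> a - y \<in> P \<Longrightarrow> t \<le> f y + g (a - y)) \<Longrightarrow> t \<le> mm f g a"
  unfolding mm_def by (rule cInf_greatest[OF mset_ne]) (auto simp: mset_def)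

lemma mm_approx:
  assumes "a \<in> P" "e > 0"
  shows "\<exists>y. y \<in> P \<and> a - y \<in> P \<and> f y + g (a - y) < mm f g a + e"
proof (rule ccontr)
  assume "\<not> ?thesis"
  hence "mm f g a + e \<le> mm f g a" by (intro mm_ge[OF assms(1)]) force
  thus False using assms(2) by simp
qed

lemma mm_add:
  assumes a: "a \<in> P" and b: "b \<in> P"
  shows "mm f g (a + b) = mm f g a + mm f g b"
proof (rule antisym)
  have ab: "a + b \<in> P" using a b po_add[OF po] by blast
  have "mm f g (a + b) - (f y2 + g (b - y2)) \<le> mm f g a" if y2: "y2 \<in> P" "b - y2 \<in> P" for y2
  proof (rule mm_ge[OF a])
    fix y1 assume y1: "y1 \<in> P" "a - y1 \<in> P"
    have e1: "a + b - (y1 + y2) = (a - y1) + (b - y2)" by (simp add: algebra_simps)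
    have "y1 + y2 \<in> P" "a + b - (y1 + y2) \<in> P" unfolding e1 using y1 y2 po_add[OF po] by auto
    hence "mm f g (a + b) \<le> f (y1 + y2) + g (a + b - (y1 + y2))"
      using mm_le[OF ab] by blast
    also have "a + b - (y1 + y2) = (a - y1) + (b - y2)" by (simp add: algebra_simps)
    finally show "mm f g (a + b) - (f y2 + g (b - y2)) \<le> f y1 + g (a - y1)"
      using hf hg unfolding hom_def by simp
  qed
  hence "mm f g (a + b) - mm f g a \<le> f y2 + g (b - y2)" if "y2 \<in> P" "b - y2 \<in> P" for y2
    using that by force
  hence "mm f g (a + b) - mm f g a \<le> mm f g b" by (intro mm_ge[OF b])
  thus "mm f g (a + b) \<le> mm f g a + mm f g b" by simp
next
  show "mm f g a + mm f g b \<le> mm f g (a + b)"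
  proof (rule mm_ge)
    show "a + b \<in> P" using a b po_add[OF po] by blast
    fix y assume y: "y \<in> P" "a + b - y \<in> P"
    obtain y1 where y1: "y1 \<in> P" "a - y1 \<in> P" "y - y1 \<in> P" "b - (y - y1) \<in> P"
      using riesz_dec[OF y(1) a b y(2)] by blast
    have "mm f g a + mm f g b \<le> (f y1 + g (a - y1)) + (f (y - y1) + g (b - (y - y1)))"
      using mm_le[OF a y1(1,2)] mm_le[OF b y1(3,4)] by simp
    also have "\<dots> = f y + g (a + b - y)"
    proof -
      have "y = y1 + (y - y1)" by simp
      moreover have "a + b - y = (a - y1) + (b - (y - y1))" by (simp add: algebra_simps)
      ultimately show ?thesis using hf hg unfolding hom_def by (metis add.assoc add.commute add.left_commute)
    qed
    finally show "mm f g a + mm f g b \<le> f y + g (a + b - y)" .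
  qed
qed

lemma mm_0: "mm f g 0 = 0"
  using mm_add[OF po_0[OF po] po_0[OF po]] by simp

lemma mm_wd:
  assumes "p \<in> P" "q \<in> P" "p' \<in> P" "q' \<in> P" "p - q = p' - q'"
  shows "mm f g p - mm f g q = mm f g p' - mm f g q'"
proof -
  have "p + q' = p' + q" using assms(5) by (simp add: algebra_simps)
  hence "mm f g p + mm f g q' = mm f g p' + mm f g q"
    using mm_add assms by metis
  thus ?thesis by simp
qed

definition rep :: "'g \<Rightarrow> 'g \<times> 'g" where
  "rep x = (SOME pq. fst pq \<in> P \<and> snd pq \<in> P \<and> x = fst pq - snd pq)"

lemma rep: "fst (rep x) \<in> P \<and> snd (rep x) \<in> P \<and> x = fst (rep x) - snd (rep x)"
proof -
  obtain p q where "p \<in> P" "q \<in> P" "x = p - q" using directed[OF po ou] by blast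
  hence "\<exists>pq. fst pq \<in> P \<and> snd pq \<in> P \<and> x = fst pq - snd pq" by (intro exI[of _ "(p,q)"]) auto
  thus ?thesis unfolding rep_def by (rule someI_ex)
qed

definition MM :: "'g \<Rightarrow> real" where
  "MM x = mm f g (fst (rep x)) - mm f g (snd (rep x))"

lemma MM_eq: "p \<in> P \<Longrightarrow> q \<in> P \<Longrightarrow> MM (p - q) = mm f g p - mm f g q"
  unfolding MM_def using rep[of "p - q"] by (intro mm_wd) auto

lemma MM_P: "a \<in> P \<Longrightarrow> MM a = mm f g a"
  using MM_eq[of a 0] po_0[OF po] mm_0 by simp

lemma MM_hom: "hom MM"
  unfolding hom_def
proof (intro allI)
  fix x y
  obtain p q where pq: "p \<in> P" "q \<in> P" "x = p - q" using directed[OF po ou] by blast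
  obtain p' q' where pq': "p' \<in> P" "q' \<in> P" "y = p' - q'" using directed[OF po ou] by blast
  have "x + y = (p + p') - (q + q')" unfolding pq(3) pq'(3) by (simp add: algebra_simps)
  hence "MM (x + y) = MM ((p + p') - (q + q'))" by simp
  also have "\<dots> = mm f g (p + p') - mm f g (q + q')"
    using MM_eq pq pq' po_add[OF po] by simp
  also have "\<dots> = MM x + MM y" using pq pq' MM_eq mm_add by simp
  finally show "MM (x + y) = MM x + MM y" .
qed

lemma meet_exists:
  "\<exists>M. posh P M \<and> (\<forall>a\<in>P. \<forall>y. y \<in> P \<and> a - y \<in> P \<longrightarrow> M a \<le> f y + g (a - y))
      \<and> (\<forall>a\<in>P. \<forall>e>0. \<exists>y. y \<in> P \<and> a - y \<in> P \<and> f y + g (a - y) < M a + e)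
      \<and> (\<forall>a\<in>P. \<forall>t. (\<forall>y. y \<in> P \<and> a - y \<in> P \<longrightarrow> t \<le> f y + g (a - y)) \<longrightarrow> t \<le> M a)"
proof (intro exI[of _ MM] conjI ballI allI impI)
  show "posh P MM" unfolding posh_def
  proof (intro conjI MM_hom ballI)
    fix a assume a: "a \<in> P"
    show "0 \<le> MM a" unfolding MM_P[OF a]
      by (rule mm_ge[OF a]) (use pf pg in \<open>auto simp: posh_def intro: add_nonneg_nonneg\<close>)
  qed
qed (auto simp: MM_P mm_le mm_approx mm_ge)

end


lemma decomp:
  assumes pf: "posh P f" and p1: "posh P g1" and p2: "posh P g2"
    and le: "hle P f (\<lambda>x. g1 x + g2 x)"
  shows "\<exists>h1 h2. posh P h1 \<and> posh P h2 \<and> (\<forall>x. f x = h1 x + h2 x) \<and> hle P h1 g1 \<and> hle P h2 g2"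
proof -
  obtain M where M: "posh P M" "\<forall>a\<in>P. \<forall>y. y \<in> P \<and> a - y \<in> P \<longrightarrow> M a \<le> f y + g1 (a - y)"
      "\<forall>a\<in>P. \<forall>t. (\<forall>y. y \<in> P \<and> a - y \<in> P \<longrightarrow> t \<le> f y + g1 (a - y)) \<longrightarrow> t \<le> M a"
    using meet_exists[OF pf p1] by blast
  have hf: "hom f" and h1: "hom g1" and h2: "hom g2" and hM: "hom M"
    using pf p1 p2 M(1) posh_def by auto
  have z: "0 \<in> P" using po_0[OF po] .
  have Mg1: "M a \<le> g1 a" if "a \<in> P" for a using M(2) that z hom_0[OF hf] by force
  have Mf: "M a \<le> f a" if "a \<in> P" for a using M(2) that z hom_0[OF h1] by force
  have Mg2: "f a - M a \<le> g2 a" if a: "a \<in> P" for a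
  proof -
    have "\<forall>y. y \<in> P \<and> a - y \<in> P \<longrightarrow> f a - g2 a \<le> f y + g1 (a - y)"
    proof (intro allI impI)
      fix y assume y: "y \<in> P \<and> a - y \<in> P"
      have "f (a - y) \<le> g1 (a - y) + g2 (a - y)" using le y unfolding hle_def by blast
      moreover have "0 \<le> g2 y" using p2 y posh_def by blast
      moreover have "f a = f y + f (a - y)" "g2 a = g2 y + g2 (a - y)"
        using hom_diff[OF hf] hom_diff[OF h2] by auto
      ultimately show "f a - g2 a \<le> f y + g1 (a - y)" by linarith
    qed
    hence "f a - g2 a \<le> M a" using M(3) a by blast
    thus ?thesis by simp
  qed
  show ?thesis
  proof (rule exI[of _ M], rule exI[of _ "\<lambda>x. f x - M x"], intro conjI)
    show "posh P (\<lambda>x. f x - M x)" unfolding posh_def using hom_sub[OF hf hM] Mf by auto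
  qed (use M(1) Mg1 Mg2 in \<open>auto simp: hle_def\<close>)
qed

lemma extreme_prop:
  assumes tau: "\<tau> \<in> pure_traces P u0" and ph: "posh P h" and le: "hle P h (\<lambda>x. lam * \<tau> x)"
  shows "h = (\<lambda>x. h u0 * \<tau> x)"
proof -
  have tS: "\<tau> \<in> states P u0" using pure_states[OF tau] .
  have ht: "hom \<tau>" using states_hom[OF tS] .
  have t1: "\<tau> u0 = 1" using tS unfolding states_def by blast
  have hh: "hom h" using ph posh_def by blast
  have u0P: "u0 \<in> P" using ou order_unit_def by blast
  define k where "k = (\<lambda>x. lam * \<tau> x - h x)"
  have pk: "posh P k" unfolding k_def posh_def
    using hom_sub[OF hom_scale[OF ht] hh] le unfolding hle_def by auto
  define s where "s = h u0"
  define t where "t = k u0"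
  have s0: "s \<ge> 0" using ph u0P unfolding s_def posh_def by blast
  have t0: "t \<ge> 0" using pk u0P unfolding t_def posh_def by blast
  have lst: "lam = s + t" unfolding s_def t_def k_def using t1 by simp
  show ?thesis
  proof (cases "s = 0")
    case True
    hence h0: "h u0 = 0" using s_def by simp
    hence "h x = 0" for x using posh_zero[OF ou ph] by blast
    thus ?thesis using h0 by (simp add: fun_eq_iff)
  next
    case sn: False
    show ?thesis
    proof (cases "t = 0")
      case True
      hence k0: "k u0 = 0" using t_def by simp
      hence "k x = 0" for x using posh_zero[OF ou pk] by blast
      hence hl: "h x = lam * \<tau> x" for x unfolding k_def by simp
      have "h u0 = lam" using hl[of u0] t1 by simp
      thus ?thesis using hl by (simp add: fun_eq_iff)
    next
      case tn: False
      define a where "a = (\<lambda>x. h x / s)"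
      define b where "b = (\<lambda>x. k x / t)"
      have hk: "hom k" using pk posh_def by blast
      have aS: "a \<in> states P u0"
      proof -
        have "\<forall>x y. h (x + y) / s = h x / s + h y / s"
          using hh unfolding hom_def by (simp add: add_divide_distrib)
        moreover have "\<forall>x\<in>P. 0 \<le> h x / s" using ph s0 unfolding posh_def by simp
        moreover have "h u0 / s = 1" using sn s_def by simp
        ultimately show ?thesis unfolding states_def a_def by blast
      qed
      have bS: "b \<in> states P u0"
      proof -
        have "\<forall>x y. k (x + y) / t = k x / t + k y / t"
          using hk unfolding hom_def by (simp add: add_divide_distrib)
        moreover have "\<forall>x\<in>P. 0 \<le> k x / t" using pk t0 unfolding posh_def by simp
        moreover have "k u0 / t = 1" using tn t_def by simp
        ultimately show ?thesis unfolding states_def b_def by blast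
      qed
      have sp: "s > 0" "t > 0" using s0 sn t0 tn by auto
      have eq: "\<tau> = (\<lambda>x. (s / lam) * a x + (1 - s / lam) * b x)"
      proof
        fix x
        have "1 - s / lam = t / lam" using lst sp by (simp add: field_simps)
        moreover have "(s / lam) * a x = h x / lam" unfolding a_def using sp by simp
        moreover have "(t / lam) * b x = k x / lam" unfolding b_def using sp by simp
        ultimately have "(s / lam) * a x + (1 - s / lam) * b x = (h x + k x) / lam"
          by (metis add_divide_distrib)
        also have "\<dots> = \<tau> x" unfolding k_def using lst sp by simp
        finally show "\<tau> x = (s / lam) * a x + (1 - s / lam) * b x" by simp
      qed
      have r: "0 < s / lam \<and> s / lam < 1" using sp lst by auto
      have ext: "\<forall>a\<in>states P u0. \<forall>b\<in>states P u0. \<forall>t::real. 0 < t \<and> t < 1 \<and>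
         \<tau> = (\<lambda>x. t * a x + (1 - t) * b x) \<longrightarrow> a = b"
        using tau unfolding pure_traces_def extreme_points_def by blast
      have ab: "a = b" using ext[rule_format, OF aS bS, of "s / lam"] r eq by blast
      have "\<tau> x = h x / s" for x
      proof -
        have "\<tau> x = (s / lam) * a x + (1 - s / lam) * a x" using eq ab by (metis (no_types))
        also have "\<dots> = a x" by (simp add: algebra_simps)
        finally show ?thesis unfolding a_def .
      qed
      thus ?thesis using sp s_def by (auto simp: field_simps)
    qed
  qed
qed


lemma posh_lin: "(\<forall>i\<in>A. posh P (h i)) \<Longrightarrow> (\<forall>i\<in>A. c i \<ge> 0) \<Longrightarrow> posh P (\<lambda>x. \<Sum>i\<in>A. c i * h i x)"
  unfolding posh_def using hom_lin[of A h c] by (auto intro!: sum_nonneg)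

lemma posh_scale: "posh P f \<Longrightarrow> c \<ge> 0 \<Longrightarrow> posh P (\<lambda>x. c * f x)"
  unfolding posh_def using hom_scale by auto

lemma lemD:
  fixes f :: "nat \<Rightarrow> 'g \<Rightarrow> real" and n :: nat
  assumes pt: "\<forall>i<n. f i \<in> pure_traces P u0" and inj: "inj_on f {..<n}"
    and I: "finite I" "I \<subseteq> {..<n}" and i0: "i0 < n" "i0 \<notin> I" and c: "\<forall>i\<in>I. c i \<ge> 0"
    and ph: "posh P h" and l1: "hle P h (\<lambda>x. lam * f i0 x)"
    and l2: "hle P h (\<lambda>x. \<Sum>i\<in>I. c i * f i x)"
  shows "h x = 0"
  using I(1) I(2) i0(2) c ph l1 l2
proof (induction I arbitrary: h x rule: finite_induct)
  case empty
  have u0P: "u0 \<in> P" using ou order_unit_def by blast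
  have "h u0 \<le> 0" using empty.prems(6) u0P unfolding hle_def by simp
  moreover have "h u0 \<ge> 0" using empty.prems(4) u0P unfolding posh_def by blast
  ultimately have "h u0 = 0" by simp
  thus ?case using posh_zero[OF ou empty.prems(4)] by blast
next
  case (insert j J)
  have jn: "j < n" using insert.prems(1) by blast
  have Jn: "J \<subseteq> {..<n}" using insert.prems(1) by blast
  have ji0: "j \<noteq> i0" using insert.prems(2) by blast
  have cj: "c j \<ge> 0" using insert.prems(3) by blast
  have pfi: "posh P (f i)" if "i < n" for i using pt that pure_states states_posh by blast
  have pg1: "posh P (\<lambda>x. c j * f j x)" using posh_scale[OF pfi[OF jn] cj] .
  have pg2: "posh P (\<lambda>x. \<Sum>i\<in>J. c i * f i x)"
    using posh_lin[of J "\<lambda>i. f i" c] pfi Jn insert.prems(3) by auto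
  have "hle P h (\<lambda>x. c j * f j x + (\<Sum>i\<in>J. c i * f i x))"
    using insert.prems(6) insert.hyps unfolding hle_def by simp
  then obtain h1 h2 where hs: "posh P h1" "posh P h2" "\<forall>x. h x = h1 x + h2 x"
      "hle P h1 (\<lambda>x. c j * f j x)" "hle P h2 (\<lambda>x. \<Sum>i\<in>J. c i * f i x)"
    using decomp[OF insert.prems(4) pg1 pg2] by blast
  have h1le: "hle P h1 (\<lambda>x. lam * f i0 x)" and h2le: "hle P h2 (\<lambda>x. lam * f i0 x)"
    unfolding hle_def
  proof (safe)
    fix a assume a: "a \<in> P"
    have "h1 a \<ge> 0" "h2 a \<ge> 0" using hs(1,2) a unfolding posh_def by blast+
    moreover have "h a \<le> lam * f i0 a" using insert.prems(5) a unfolding hle_def by blast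
    moreover have "h a = h1 a + h2 a" using hs(3) by blast
    ultimately show "h1 a \<le> lam * f i0 a" "h2 a \<le> lam * f i0 a" by linarith+
  qed
  have h2z: "h2 y = 0" for y
    using insert.IH[OF Jn _ _ hs(2) h2le hs(5)] insert.prems(2,3) by blast
  have e1: "h1 = (\<lambda>x. h1 u0 * f j x)" using extreme_prop[OF pt[rule_format, OF jn] hs(1) hs(4)] .
  have e2: "h1 = (\<lambda>x. h1 u0 * f i0 x)" using extreme_prop[OF pt[rule_format, OF i0(1)] hs(1) h1le] .
  have "h1 u0 = 0"
  proof (rule ccontr)
    assume ne: "h1 u0 \<noteq> 0"
    have "f j = f i0"
    proof
      fix y
      have "h1 u0 * f j y = h1 u0 * f i0 y" using fun_cong[OF e1, of y] fun_cong[OF e2, of y] by argo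
      thus "f j y = f i0 y" using ne by simp
    qed
    hence "j = i0" using inj jn i0(1) unfolding inj_on_def by blast
    thus False using ji0 by simp
  qed
  hence "h1 y = 0" for y using fun_cong[OF e1, of y] by simp
  thus ?case using hs(3) h2z by simp
qed


lemma lin_indep:
  fixes f :: "nat \<Rightarrow> 'g \<Rightarrow> real" and n :: nat
  assumes pt: "\<forall>i<n. f i \<in> pure_traces P u0" and inj: "inj_on f {..<n}"
    and z: "\<forall>x. (\<Sum>i<n. c i * f i x) = 0"
  shows "\<forall>i<n. c i = 0"
proof (rule ccontr)
  assume "\<not> ?thesis"
  then obtain i0 where i0: "i0 < n" "c i0 \<noteq> 0" by blast
  define d where "d = (if c i0 > 0 then c else (\<lambda>i. - c i))"
  have d0: "d i0 > 0" using i0 unfolding d_def by auto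
  have dz: "(\<Sum>i<n. d i * f i x) = 0" for x
    using z unfolding d_def by (auto simp: sum_negf)
  define B where "B = ({..<n} - {i0}) \<inter> {i. d i < 0}"
  have pfi: "posh P (f i)" if "i < n" for i using pt that pure_states states_posh by blast
  have u0P: "u0 \<in> P" using ou order_unit_def by blast
  have ph: "posh P (\<lambda>x. d i0 * f i0 x)" using posh_scale[OF pfi[OF i0(1)]] d0 by simp
  have le: "hle P (\<lambda>x. d i0 * f i0 x) (\<lambda>x. \<Sum>i\<in>B. (- d i) * f i x)"
    unfolding hle_def
  proof
    fix a assume a: "a \<in> P"
    have "0 = (\<Sum>i<n. d i * f i a)" using dz by simp
    also have "\<dots> = d i0 * f i0 a + (\<Sum>i\<in>{..<n} - {i0}. d i * f i a)"
      using i0(1) by (intro sum.remove) auto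
    also have "(\<Sum>i\<in>{..<n} - {i0}. d i * f i a) = (\<Sum>i\<in>B. d i * f i a)
        + (\<Sum>i\<in>({..<n} - {i0}) - {i. d i < 0}. d i * f i a)"
      unfolding B_def by (rule sum.Int_Diff) simp
    finally have eq: "0 = d i0 * f i0 a + (\<Sum>i\<in>B. d i * f i a)
        + (\<Sum>i\<in>({..<n} - {i0}) - {i. d i < 0}. d i * f i a)" by simp
    have "(\<Sum>i\<in>({..<n} - {i0}) - {i. d i < 0}. d i * f i a) \<ge> 0"
      using pfi a unfolding posh_def by (intro sum_nonneg) auto
    hence "d i0 * f i0 a \<le> - (\<Sum>i\<in>B. d i * f i a)" using eq by linarith
    thus "d i0 * f i0 a \<le> (\<Sum>i\<in>B. (- d i) * f i a)" by (simp add: sum_negf)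
  qed
  have "d i0 * f i0 u0 = 0"
    using lemD[OF pt inj _ _ i0(1) _ _ ph _ le, of "d i0"] unfolding B_def hle_def by auto
  moreover have "f i0 u0 = 1" using pt i0(1) pure_states unfolding states_def by blast
  ultimately show False using d0 by simp
qed


lemma pos_state:
  assumes simp: "simple_group P" and sS: "\<sigma> \<in> states P u0" and y: "y \<in> P" "y \<noteq> 0"
  shows "\<sigma> y > 0"
proof -
  define I where "I = {x. \<exists>m. nsmul m y + x \<in> P \<and> nsmul m y - x \<in> P}"
  have my: "nsmul m y \<in> P" for m using nsmul_P[OF po y(1)] .
  have add: "a \<in> P \<Longrightarrow> b \<in> P \<Longrightarrow> a + b \<in> P" for a b using po_add[OF po] by blast
  have oi: "order_ideal P I" unfolding order_ideal_def
  proof (intro conjI ballI allI impI)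
    show "0 \<in> I" unfolding I_def using po_0[OF po] by (intro CollectI exI[of _ 0]) simp
  next
    fix a b assume a: "a \<in> I" and b: "b \<in> I"
    obtain ma where ma: "nsmul ma y + a \<in> P" "nsmul ma y - a \<in> P" using a I_def by blast
    obtain mb where mb: "nsmul mb y + b \<in> P" "nsmul mb y - b \<in> P" using b I_def by blast
    have "nsmul (ma + mb) y + (a - b) = (nsmul ma y + a) + (nsmul mb y - b)"
      "nsmul (ma + mb) y - (a - b) = (nsmul ma y - a) + (nsmul mb y + b)"
      by (simp_all add: nsmul_add algebra_simps)
    thus "a - b \<in> I" unfolding I_def using ma mb add by (intro CollectI exI[of _ "ma + mb"]) metis
  next
    fix a b assume h: "pleq P 0 a \<and> pleq P a b \<and> b \<in> I"
    obtain m where m: "nsmul m y + b \<in> P" "nsmul m y - b \<in> P" using h I_def by blast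
    have aP: "a \<in> P" "b - a \<in> P" using h unfolding pleq_def by auto
    have "nsmul m y - a = (nsmul m y - b) + (b - a)" by simp
    hence "nsmul m y - a \<in> P" using m aP add by metis
    moreover have "nsmul m y + a \<in> P" using add my aP by blast
    ultimately show "a \<in> I" unfolding I_def by blast
  next
    fix g assume g: "g \<in> I"
    obtain m where m: "nsmul m y + g \<in> P" "nsmul m y - g \<in> P" using g I_def by blast
    have "nsmul (m + m) y + (nsmul m y + g) = nsmul m y + (nsmul m y + (nsmul m y + g))"
      "nsmul (m + m) y - (nsmul m y + g) = nsmul m y - g"
      by (simp_all add: nsmul_add algebra_simps)
    hence "nsmul m y + g \<in> I" unfolding I_def using add my m by (intro CollectI exI[of _ "m + m"]) metis
    moreover have "nsmul m y \<in> I" unfolding I_def using add my po_0[OF po]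
      by (intro CollectI exI[of _ m]) simp
    moreover have "g = (nsmul m y + g) - nsmul m y" by simp
    ultimately show "\<exists>a b. a \<in> I \<inter> P \<and> b \<in> I \<inter> P \<and> g = a - b" using m(1) my by blast
  qed
  have "y \<in> I" unfolding I_def using add y po_0[OF po] by (intro CollectI exI[of _ 1]) simp
  hence "I \<noteq> {0}" using y(2) by blast
  hence "I = UNIV" using simp oi unfolding simple_group_def by blast
  then obtain m where m: "nsmul m y - u0 \<in> P" unfolding I_def by blast
  have hs: "hom \<sigma>" using states_hom[OF sS] .
  have "\<sigma> (nsmul m y - u0) \<ge> 0" using m sS unfolding states_def by blast
  hence "real m * \<sigma> y \<ge> 1" using sS unfolding states_def by (simp add: hom_diff[OF hs] hom_nsmul[OF hs])
  moreover have "\<sigma> y \<ge> 0" using y sS unfolding states_def by blast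
  ultimately show ?thesis by (metis less_eq_real_def mult_zero_right not_one_le_zero)
qed

lemma inf_ker:
  assumes sS: "\<sigma> \<in> states P u0" and x: "x \<in> infinitesimals P u0"
  shows "\<sigma> x = 0"
proof (rule ccontr)
  assume ne: "\<sigma> x \<noteq> 0"
  have hs: "hom \<sigma>" using states_hom[OF sS] .
  have s1: "\<sigma> u0 = 1" using sS unfolding states_def by blast
  obtain q :: nat where q: "1 / \<bar>\<sigma> x\<bar> < real q" using reals_Archimedean2 by blast
  have qp: "q > 0" using q ne by (metis abs_ge_zero divide_nonneg_nonneg less_eq_real_def not_less of_nat_0 zero_le_one gr0I)
  have "pleq P (- nsmul 1 u0) (nsmul q x) \<and> pleq P (nsmul q x) (nsmul 1 u0)"
    using x qp unfolding infinitesimals_def by blast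
  hence "nsmul q x - (- nsmul 1 u0) \<in> P" "nsmul 1 u0 - nsmul q x \<in> P" unfolding pleq_def by auto
  hence "\<sigma> (nsmul q x - (- nsmul 1 u0)) \<ge> 0" "\<sigma> (nsmul 1 u0 - nsmul q x) \<ge> 0"
    using sS unfolding states_def by blast+
  hence "real q * \<sigma> x + 1 \<ge> 0" "1 - real q * \<sigma> x \<ge> 0"
    using hs[unfolded hom_def] by (simp_all add: hom_diff[OF hs] hom_nsmul[OF hs] hom_minus[OF hs] s1)
  hence "real q * \<bar>\<sigma> x\<bar> \<le> 1" by (simp add: abs_if)
  moreover have "real q * \<bar>\<sigma> x\<bar> > 1" using q ne by (simp add: field_simps)
  ultimately show False by simp
qed

lemma unit_pos:
  assumes u: "order_unit P u" and sS: "\<sigma> \<in> states P u0"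
  shows "\<sigma> u > 0"
proof -
  obtain m where m: "pleq P u0 (nsmul m u)" using u unfolding order_unit_def by blast
  have hs: "hom \<sigma>" using states_hom[OF sS] .
  have "\<sigma> (nsmul m u - u0) \<ge> 0" using m sS unfolding states_def pleq_def by blast
  hence m1: "real m * \<sigma> u \<ge> 1" using sS unfolding states_def by (simp add: hom_diff[OF hs] hom_nsmul[OF hs])
  show ?thesis
  proof (rule ccontr)
    assume "\<not> \<sigma> u > 0"
    hence "real m * \<sigma> u \<le> 0" by (simp add: mult_nonneg_nonpos)
    thus False using m1 by simp
  qed
qed

lemma rescale_state:
  assumes sS: "\<sigma> \<in> states P u0" and pos: "\<sigma> u > 0"
  shows "(\<lambda>x. \<sigma> x / \<sigma> u) \<in> states P u"
  using sS pos unfolding states_def by (auto simp: add_divide_distrib)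


lemma meet_small:
  assumes pf: "posh P f" and pg: "posh P g"
    and z: "\<And>h. posh P h \<Longrightarrow> hle P h f \<Longrightarrow> hle P h g \<Longrightarrow> \<forall>x. h x = 0"
    and a: "a \<in> P" and e: "e > 0"
  shows "\<exists>y. y \<in> P \<and> a - y \<in> P \<and> f y + g (a - y) < e"
proof -
  obtain M where M: "posh P M" "\<forall>a\<in>P. \<forall>y. y \<in> P \<and> a - y \<in> P \<longrightarrow> M a \<le> f y + g (a - y)"
      "\<forall>a\<in>P. \<forall>e>0. \<exists>y. y \<in> P \<and> a - y \<in> P \<and> f y + g (a - y) < M a + e"
    using meet_exists[OF pf pg] by blast
  have hf: "hom f" and hg: "hom g" using pf pg posh_def by auto
  have zP: "0 \<in> P" using po_0[OF po] .
  have "hle P M f" unfolding hle_def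
  proof
    fix b assume b: "b \<in> P"
    show "M b \<le> f b" using M(2) b zP hom_0[OF hg] by force
  qed
  moreover have "hle P M g" unfolding hle_def
  proof
    fix b assume b: "b \<in> P"
    show "M b \<le> g b" using M(2) b zP hom_0[OF hf] by force
  qed
  ultimately have "M a = 0" using z[OF M(1)] by blast
  thus ?thesis using M(3) a e by force
qed

lemma Ints_small:
  assumes "(x::real) \<in> \<int>" "\<bar>x\<bar> < 1" shows "x = 0"
proof -
  obtain k where k: "x = of_int k" using assms(1) Ints_cases by blast
  hence "\<bar>real_of_int k\<bar> < 1" using assms(2) by simp
  hence "\<bar>k\<bar> < 1" by linarith
  hence "k = 0" by simp
  thus ?thesis using k by simp
qed

lemma discrete_comb:
  fixes f :: "nat \<Rightarrow> 'g \<Rightarrow> real" and n :: nat and \<beta> :: "nat \<Rightarrow> real"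
  assumes simp: "simple_group P" and pt: "\<forall>i<n. f i \<in> pure_traces P u0" and inj: "inj_on f {..<n}"
    and n2: "n \<ge> 2" and i0: "i0 < n" "\<beta> i0 \<noteq> 0"
    and ints: "\<forall>x. (\<Sum>i<n. \<beta> i * f i x) \<in> \<int>"
  shows False
proof -
  define i1 where "i1 = (if i0 = 0 then 1 else (0::nat))"
  have i1: "i1 < n" "i1 \<noteq> i0" using n2 unfolding i1_def by auto
  have fS: "f i \<in> states P u0" if "i < n" for i using pt that pure_states by blast
  have pfi: "posh P (f i)" if "i < n" for i using fS that states_posh by blast
  have hfi: "hom (f i)" if "i < n" for i using pfi that posh_def by blast
  have f1: "f i u0 = 1" if "i < n" for i using fS[OF that] unfolding states_def by blast
  have u0P: "u0 \<in> P" using ou order_unit_def by blast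
  define b0 where "b0 = \<bar>\<beta> i0\<bar>"
  have b0: "b0 > 0" using i0 unfolding b0_def by simp
  define e where "e = min (1/2) (1 / (2 * b0))"
  have e: "e > 0" using b0 unfolding e_def by simp
  have z1: "\<forall>x. h x = 0" if "posh P h" "hle P h (f i0)" "hle P h (f i1)" for h
  proof
    fix x
    show "h x = 0"
      by (rule lemD[where I="{i1}" and lam=1 and c="\<lambda>_. 1", OF pt inj _ _ i0(1) _ _ that(1)])
         (use that i1 in \<open>auto simp: hle_def\<close>)
  qed
  obtain y where y: "y \<in> P" "u0 - y \<in> P" "f i0 y + f i1 (u0 - y) < e"
    using meet_small[OF pfi[OF i0(1)] pfi[OF i1(1)] z1 u0P e] by blast
  have yn: "y \<noteq> 0"
  proof
    assume "y = 0"
    hence "f i0 y + f i1 (u0 - y) = 1" using f1[OF i1(1)] hom_0[OF hfi[OF i0(1)]] by simp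
    thus False using y(3) unfolding e_def by simp
  qed
  have fy: "f i0 y > 0" using pos_state[OF simp fS[OF i0(1)] y(1) yn] .
  have "f i1 (u0 - y) \<ge> 0" using pfi[OF i1(1)] y(2) posh_def by blast
  hence fy2: "f i0 y < 1 / (2 * b0)" using y(3) unfolding e_def by simp
  define d where "d = b0 * f i0 y"
  have d: "d > 0" "d < 1/2" using fy fy2 b0 unfolding d_def by (auto simp: field_simps)
  define J where "J = {..<n} - {i0}"
  define R where "R = (\<lambda>x. \<Sum>i\<in>J. \<bar>\<beta> i\<bar> * f i x)"
  have pR: "posh P R" unfolding R_def using posh_lin[of J f "\<lambda>i. \<bar>\<beta> i\<bar>"] pfi unfolding J_def by auto
  have z2: "\<forall>x. h x = 0" if "posh P h" "hle P h (f i0)" "hle P h R" for h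
  proof
    fix x
    show "h x = 0"
      by (rule lemD[where I=J and lam=1 and c="\<lambda>i. \<bar>\<beta> i\<bar>", OF pt inj _ _ i0(1) _ _ that(1)])
         (use that in \<open>auto simp: hle_def J_def R_def\<close>)
  qed
  define e' where "e' = d / (2 * (b0 + 1))"
  have e': "e' > 0" using d b0 unfolding e'_def by simp
  obtain z' where z': "z' \<in> P" "y - z' \<in> P" "f i0 z' + R (y - z') < e'"
    using meet_small[OF pfi[OF i0(1)] pR z2 y(1) e'] by blast
  define z where "z = y - z'"
  have zP: "z \<in> P" using z' z_def by simp
  have fz'0: "f i0 z' \<ge> 0" using pfi[OF i0(1)] z'(1) posh_def by blast
  have Rz0: "R z \<ge> 0" using pR zP posh_def by blast
  have Rz: "R z < e'" using z' fz'0 unfolding z_def by simp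
  have fz'e: "f i0 z' < e'" using z' Rz0 unfolding z_def by simp
  have split: "(\<Sum>i<n. \<beta> i * f i z) = \<beta> i0 * f i0 z + (\<Sum>i\<in>J. \<beta> i * f i z)"
    unfolding J_def using i0(1) by (intro sum.remove) auto
  have "\<bar>\<Sum>i\<in>J. \<beta> i * f i z\<bar> \<le> (\<Sum>i\<in>J. \<bar>\<beta> i * f i z\<bar>)" by (rule sum_abs)
  also have "\<dots> = R z" unfolding R_def
  proof (rule sum.cong)
    fix i assume "i \<in> J"
    hence "f i z \<ge> 0" using pfi zP unfolding J_def posh_def by blast
    thus "\<bar>\<beta> i * f i z\<bar> = \<bar>\<beta> i\<bar> * f i z" by (simp add: abs_mult)
  qed simp
  finally have restb: "\<bar>\<Sum>i\<in>J. \<beta> i * f i z\<bar> < e'" using Rz by simp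
  have fz: "f i0 z = f i0 y - f i0 z'" unfolding z_def using hom_diff[OF hfi[OF i0(1)]] by simp
  have "\<bar>\<beta> i0 * f i0 z - \<beta> i0 * f i0 y\<bar> = b0 * f i0 z'"
    unfolding fz b0_def using fz'0 by (simp add: algebra_simps abs_mult)
  also have "\<dots> \<le> b0 * e'" using fz'e b0 by simp
  finally have t1: "\<bar>\<beta> i0 * f i0 z - \<beta> i0 * f i0 y\<bar> \<le> b0 * e'" .
  have "b0 * e' + e' = (b0 + 1) * e'" by (simp add: algebra_simps)
  also have "\<dots> = d / 2"
  proof -
    have ne: "b0 + 1 \<noteq> 0" using b0 by simp
    show ?thesis unfolding e'_def using ne by (simp add: field_simps)
  qed
  finally have be: "b0 * e' + e' = d / 2" .
  define L where "L = (\<Sum>i<n. \<beta> i * f i z)"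
  have close: "\<bar>L - \<beta> i0 * f i0 y\<bar> < d / 2"
    using t1 restb be split unfolding L_def by linarith
  have absd: "\<bar>\<beta> i0 * f i0 y\<bar> = d" unfolding d_def b0_def using fy by (simp add: abs_mult)
  have "\<bar>L\<bar> < 1" using close absd d by linarith
  hence "L = 0" using Ints_small ints L_def by blast
  thus False using close absd by simp
qed

end

definition combo :: "nat \<Rightarrow> (nat \<Rightarrow> 'g \<Rightarrow> real) \<Rightarrow> ('g \<Rightarrow> real) set" where
  "combo k f = {h. \<exists>C. h = (\<lambda>x. \<Sum>i<k. C i * f i x)}"

lemma combo_mono: "h \<in> combo k f \<Longrightarrow> h \<in> combo (Suc k) f"
proof -
  assume "h \<in> combo k f"
  then obtain C where C: "h = (\<lambda>x. \<Sum>i<k. C i * f i x)" unfolding combo_def by blast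
  have "h = (\<lambda>x. \<Sum>i<Suc k. (C(k := 0)) i * f i x)" unfolding C by (auto intro!: sum.cong)
  thus ?thesis unfolding combo_def by blast
qed

lemma combo_sub: "h1 \<in> combo k f \<Longrightarrow> h2 \<in> combo k f \<Longrightarrow> (\<lambda>x. h1 x - c * h2 x) \<in> combo k f"
proof -
  assume "h1 \<in> combo k f" "h2 \<in> combo k f"
  then obtain C1 C2 where C: "h1 = (\<lambda>x. \<Sum>i<k. C1 i * f i x)" "h2 = (\<lambda>x. \<Sum>i<k. C2 i * f i x)"
    unfolding combo_def by blast
  have "(\<lambda>x. h1 x - c * h2 x) = (\<lambda>x. \<Sum>i<k. (C1 i - c * C2 i) * f i x)"
    unfolding C by (simp add: sum_subtractf sum_distrib_left algebra_simps)
  hence "\<exists>C. (\<lambda>x. h1 x - c * h2 x) = (\<lambda>x. \<Sum>i<k. C i * f i x)" by (rule exI[of _ "\<lambda>i. C1 i - c * C2 i"])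
  thus ?thesis unfolding combo_def by simp
qed

lemma combo_div: "h \<in> combo k f \<Longrightarrow> (\<lambda>x. h x / c) \<in> combo k f"
proof -
  assume "h \<in> combo k f"
  then obtain C where C: "h = (\<lambda>x. \<Sum>i<k. C i * f i x)" unfolding combo_def by blast
  have "(\<lambda>x. h x / c) = (\<lambda>x. \<Sum>i<k. (C i / c) * f i x)" unfolding C by (simp add: sum_divide_distrib)
  hence "\<exists>C. (\<lambda>x. h x / c) = (\<lambda>x. \<Sum>i<k. C i * f i x)" by (rule exI[of _ "\<lambda>i. C i / c"])
  thus ?thesis unfolding combo_def by simp
qed

lemma dual_basis:
  fixes f :: "nat \<Rightarrow> 'g \<Rightarrow> real" and u :: 'g
  assumes "\<forall>c. (\<forall>x. (\<Sum>i<k. c i * f i x) = 0) \<longrightarrow> (\<forall>i<k. c i = 0)"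
    and "f 0 u \<noteq> 0"
  shows "\<exists>y a. (\<forall>j<k. a j \<in> combo k f) \<and> (\<forall>j<k. \<forall>l<k. a j (y l) = (if j = l then 1 else 0)) \<and> y 0 = u"
  using assms
proof (induction k)
  case 0
  show ?case by (intro exI[of _ "\<lambda>_. u"]) auto
next
  case (Suc k)
  have indk: "\<forall>c. (\<forall>x. (\<Sum>i<k. c i * f i x) = 0) \<longrightarrow> (\<forall>i<k. c i = 0)"
  proof (intro allI impI)
    fix c i assume z: "\<forall>x. (\<Sum>i<k. c i * f i x) = 0" and i: "i < k"
    have "(\<Sum>i<k. (c(k := 0)) i * f i x) = (\<Sum>i<k. c i * f i x)" for x by (intro sum.cong) auto
    hence A: "\<forall>x. (\<Sum>i<Suc k. (c(k := 0)) i * f i x) = 0" using z by simp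
    have "(\<forall>x. (\<Sum>i<Suc k. (c(k := 0)) i * f i x) = 0) \<longrightarrow> (\<forall>i<Suc k. (c(k := 0)) i = 0)"
      using Suc.prems(1) by (rule spec)
    hence "\<forall>i<Suc k. (c(k := 0)) i = 0" using A by blast
    hence "(c(k := 0)) i = 0" using i less_SucI by blast
    moreover have "i \<noteq> k" using i by simp
    ultimately show "c i = 0" by simp
  qed
  obtain y a where ya: "\<forall>j<k. a j \<in> combo k f" "\<forall>j<k. \<forall>l<k. a j (y l) = (if j = l then 1 else 0)" "y 0 = u"
    using Suc.IH[OF indk Suc.prems(2)] by blast
  have "\<forall>j\<in>{..<k}. \<exists>C. a j = (\<lambda>x. \<Sum>i<k. C i * f i x)" using ya(1) unfolding combo_def by simp
  from bchoice[OF this] obtain Cf where Cf0: "\<forall>j\<in>{..<k}. a j = (\<lambda>x. \<Sum>i<k. Cf j i * f i x)" ..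
  have Cf: "\<forall>j<k. a j = (\<lambda>x. \<Sum>i<k. Cf j i * f i x)" using Cf0 by simp
  define g where "g = (\<lambda>x. f k x - (\<Sum>j<k. f k (y j) * a j x))"
  define c' where "c' = (\<lambda>i. if i = k then 1 else - (\<Sum>j<k. f k (y j) * Cf j i))"
  have gc: "g x = (\<Sum>i<Suc k. c' i * f i x)" for x
  proof -
    have "(\<Sum>j<k. f k (y j) * a j x) = (\<Sum>j<k. f k (y j) * (\<Sum>i<k. Cf j i * f i x))"
      using Cf by (intro sum.cong) auto
    also have "\<dots> = (\<Sum>j<k. \<Sum>i<k. f k (y j) * Cf j i * f i x)"
      by (simp add: sum_distrib_left mult.assoc)
    also have "\<dots> = (\<Sum>i<k. \<Sum>j<k. f k (y j) * Cf j i * f i x)"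
      by (rule sum.swap)
    also have "\<dots> = (\<Sum>i<k. (\<Sum>j<k. f k (y j) * Cf j i) * f i x)"
      by (simp add: sum_distrib_right)
    finally have e1: "g x = f k x - (\<Sum>i<k. (\<Sum>j<k. f k (y j) * Cf j i) * f i x)" unfolding g_def by simp
    have "(\<Sum>i<k. c' i * f i x) = (\<Sum>i<k. - ((\<Sum>j<k. f k (y j) * Cf j i) * f i x))"
      unfolding c'_def by (intro sum.cong) auto
    also have "\<dots> = - (\<Sum>i<k. (\<Sum>j<k. f k (y j) * Cf j i) * f i x)" by (rule sum_negf)
    finally have e2: "(\<Sum>i<k. c' i * f i x) = - (\<Sum>i<k. (\<Sum>j<k. f k (y j) * Cf j i) * f i x)" .
    have "(\<Sum>i<Suc k. c' i * f i x) = (\<Sum>i<k. c' i * f i x) + f k x" unfolding c'_def by simp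
    thus ?thesis using e1 e2 by simp
  qed
  have gcombo: "g \<in> combo (Suc k) f" unfolding combo_def using gc by auto
  have "\<exists>w. g w \<noteq> 0"
  proof (rule ccontr)
    assume "\<not> ?thesis"
    hence "\<forall>x. (\<Sum>i<Suc k. c' i * f i x) = 0" using gc by simp
    hence "c' k = 0" using Suc.prems(1) by blast
    thus False unfolding c'_def by simp
  qed
  then obtain w0 where w0: "g w0 \<noteq> 0" by blast
  define w where "w = (if k = 0 then u else w0)"
  have gw: "g w \<noteq> 0" using w0 Suc.prems(2) unfolding w_def g_def by auto
  define ak where "ak = (\<lambda>x. g x / g w)"
  define a' where "a' = (\<lambda>j. if j = k then ak else (\<lambda>x. a j x - a j w * ak x))"
  define y' where "y' = y(k := w)"
  have gyl: "g (y l) = 0" if l: "l < k" for l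
  proof -
    have "(\<Sum>j<k. f k (y j) * a j (y l)) = (\<Sum>j<k. if j = l then f k (y j) else 0)"
      using ya(2) l by (intro sum.cong) auto
    also have "\<dots> = f k (y l)" using l by (simp add: sum.delta)
    finally show ?thesis unfolding g_def by simp
  qed
  show ?case
  proof (intro exI[of _ y'] exI[of _ a'] conjI allI impI)
    fix j assume j: "j < Suc k"
    have akc: "ak \<in> combo (Suc k) f" unfolding ak_def using combo_div[OF gcombo] .
    show "a' j \<in> combo (Suc k) f"
    proof (cases "j = k")
      case True thus ?thesis using akc unfolding a'_def by simp
    next
      case False
      hence "j < k" using j by simp
      hence "a j \<in> combo (Suc k) f" using ya(1) combo_mono by blast
      thus ?thesis using False combo_sub[OF _ akc] unfolding a'_def by simp
    qed
  next
    fix j l assume j: "j < Suc k" and l: "l < Suc k"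
    show "a' j (y' l) = (if j = l then 1 else 0)"
    proof (cases "l = k")
      case True
      have "ak w = 1" unfolding ak_def using gw by simp
      thus ?thesis unfolding a'_def y'_def using True by auto
    next
      case False
      hence lk: "l < k" using l by simp
      have "ak (y l) = 0" unfolding ak_def using gyl[OF lk] by simp
      thus ?thesis unfolding a'_def y'_def using False lk j ya(2) by auto
    qed
  next
    show "y' 0 = u" unfolding y'_def w_def using ya(3) by auto
  qed
qed


lemma common_denom:
  fixes h :: "'a \<Rightarrow> real"
  assumes "finite F" "\<forall>v\<in>F. h v \<in> \<rat>"
  shows "\<exists>D::int. D > 0 \<and> (\<forall>v\<in>F. of_int D * h v \<in> \<int>)"
  using assms
proof (induction F rule: finite_induct)
  case empty
  show ?case by (intro exI[of _ 1]) simp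
next
  case (insert v F)
  obtain D where D: "D > 0" "\<forall>w\<in>F. of_int D * h w \<in> \<int>" using insert by blast
  have "h v \<in> \<rat>" using insert.prems by blast
  then obtain p q where pq: "q > 0" "h v = of_int p / of_int q" by (rule Rats_cases')
  have "of_int (D * q) * h v = of_int (D * p)" using pq by simp
  hence 1: "of_int (D * q) * h v \<in> \<int>" by (metis Ints_of_int)
  have 2: "of_int (D * q) * h w \<in> \<int>" if "w \<in> F" for w
  proof -
    have "of_int (D * q) * h w = of_int q * (of_int D * h w)" by simp
    thus ?thesis using D(2) that by (metis Ints_mult Ints_of_int)
  qed
  show ?case using 1 2 D(1) pq(1) by (intro exI[of _ "D * q"]) auto
qed

lemma delta_sum: fixes j n :: nat shows "j < n \<Longrightarrow> (\<Sum>i<n. (of_int (m i)::real) * (if j = i then 1 else 0)) = of_int (m j)"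
proof -
  assume j: "j < n"
  have "(\<Sum>i<n. (of_int (m i)::real) * (if j = i then 1 else 0)) = (\<Sum>i<n. if i = j then of_int (m i) else 0)"
    by (intro sum.cong) auto
  also have "\<dots> = of_int (m j)" using j by (simp add: sum.delta)
  finally show ?thesis .
qed

lemma rel_apply:
  fixes K :: nat
  assumes "hom h" shows "h (\<Sum>i<K. zsmul (m i) (z i)) = (\<Sum>i<K. of_int (m i) * h (z i))"
  by (simp add: hom_sum[OF assms] hom_zsmul[OF assms])

theorem mainTheorem15:
  fixes P :: "'g::ab_group_add set" and u0 :: 'g and n :: nat
  assumes "dimension_group P" and "simple_group P"
    and "order_unit P u0"
    and "finite (pure_traces P u0)" and "card (pure_traces P u0) = n" and "n > 1"
    and "quotient_rank_eq (infinitesimals P u0) n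
         \<or> (quotient_rank_eq (infinitesimals P u0) (n + 1) \<and> quotient_fin_gen (infinitesimals P u0))"
  shows "globally_irrationally_miscible P"
proof -
  have po: "po_group P" and ri: "riesz_interpolation P" using assms(1) dimension_group_def by auto
  interpret dgc P u0 using po ri assms(3) by unfold_locales
  define T where "T = pure_traces P u0"
  obtain f where bij: "bij_betw f {0..<n} T" using ex_bij_betw_nat_finite[OF assms(4)] assms(5) T_def by blast
  have bij': "bij_betw f {..<n} T" using bij by (simp add: atLeast0LessThan)
  have pt: "\<forall>i<n. f i \<in> pure_traces P u0" using bij' T_def bij_betw_apply by fastforce
  have inj: "inj_on f {..<n}" using bij' bij_betw_def by blast
  have fS: "f i \<in> states P u0" if "i < n" for i using pt that pure_states by blast
  have hf: "hom (f i)" if "i < n" for i using fS[OF that] states_hom by blast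
  have indep: "\<forall>c. (\<forall>x. (\<Sum>i<n. c i * f i x) = 0) \<longrightarrow> (\<forall>i<n. c i = 0)"
    using lin_indep[OF pt inj] by blast
  have n0: "0 < n" using assms(6) by simp
  show ?thesis unfolding globally_irrationally_miscible_def irrationally_miscible_def
  proof (intro allI impI ballI)
    fix u g \<sigma>
    assume u: "order_unit P u" and J: "\<forall>\<sigma>\<in>states P u. \<forall>\<tau>\<in>states P u. \<sigma> g = \<tau> g"
      and \<sigma>: "\<sigma> \<in> states P u"
    have fu: "f i u > 0" if "i < n" for i using unit_pos[OF u fS[OF that]] .
    define c where "c = f 0 g / f 0 u"
    have sig: "(\<lambda>x. f i x / f i u) \<in> states P u" if "i < n" for i
      using rescale_state[OF fS[OF that] fu[OF that]] .
    have \<sigma>c: "\<sigma> g = c" using J[rule_format, OF \<sigma> sig[OF n0]] unfolding c_def by simp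
    have fg: "f i g = c * f i u" if i: "i < n" for i
    proof -
      have "f i g / f i u = c" using J[rule_format, OF sig[OF i] sig[OF n0]] unfolding c_def by simp
      thus ?thesis using fu[OF i] by (simp add: field_simps)
    qed
    obtain y a where ya: "\<forall>j<n. a j \<in> combo n f" "\<forall>j<n. \<forall>l<n. a j (y l) = (if j = l then 1 else 0)"
        "y 0 = u"
    proof -
      have ne: "f 0 u \<noteq> 0" using fu[OF n0] by simp
      show ?thesis using dual_basis[where u=u, OF indep ne] that by blast
    qed
    have aC: "\<exists>C. a j = (\<lambda>x. \<Sum>i<n. C i * f i x)" if "j < n" for j
      using ya(1) that unfolding combo_def by blast
    have ahom: "hom (a j)" if "j < n" for j
      using aC[OF that] hom_lin[of "{..<n}" f] hf by auto
    have ainf: "a j x = 0" if jn: "j < n" and xi: "x \<in> infinitesimals P u0" for j x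
    proof -
      obtain C where C: "a j = (\<lambda>x. \<Sum>i<n. C i * f i x)" using aC[OF jn] by blast
      have "f i x = 0" if "i < n" for i using inf_ker[OF fS[OF that]] \<open>x \<in> infinitesimals P u0\<close> by blast
      thus ?thesis unfolding C by simp
    qed
    have ag: "a j g = c * a j u" if jn: "j < n" for j
    proof -
      obtain C where C: "a j = (\<lambda>x. \<Sum>i<n. C i * f i x)" using aC[OF jn] by blast
      have "(\<Sum>i<n. C i * f i g) = (\<Sum>i<n. c * (C i * f i u))" using fg by (intro sum.cong) auto
      thus ?thesis unfolding C by (simp add: sum_distrib_left)
    qed
    have au: "a j u = (if j = 0 then 1 else 0)" if "j < n" for j
      using ya(2) ya(3) that n0 by auto
    have rel: "\<exists>m. (\<exists>i<K. m i \<noteq> 0) \<and> (\<forall>j<n. (\<Sum>i<K. of_int (m i) * a j (z i)) = 0)"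
      if ni: "\<not> indep_mod (infinitesimals P u0) K z" for K z
    proof -
      obtain m where m: "(\<Sum>i<K. zsmul (m i) (z i)) \<in> infinitesimals P u0" "\<exists>i<K. m i \<noteq> 0"
        using ni unfolding indep_mod_def by blast
      have "\<forall>j<n. (\<Sum>i<K. of_int (m i) * a j (z i)) = 0"
        using ainf[OF _ m(1)] rel_apply[OF ahom] by metis
      thus ?thesis using m(2) by blast
    qed
    show "\<sigma> g \<in> \<rat>"
    proof (cases "quotient_rank_eq (infinitesimals P u0) n")
      case True
      define z where "z = (\<lambda>i. if i < n then y i else g)"
      have "\<not> indep_mod (infinitesimals P u0) (Suc n) z" using True unfolding quotient_rank_eq_def by blast
      then obtain m where m: "\<exists>i<Suc n. m i \<noteq> 0" "\<forall>j<n. (\<Sum>i<Suc n. of_int (m i) * a j (z i)) = 0"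
        using rel by blast
      have eq: "of_int (m j) + of_int (m n) * a j g = 0" if j: "j < n" for j
      proof -
        have "(\<Sum>i<n. of_int (m i) * a j (z i)) = (\<Sum>i<n. of_int (m i) * a j (y i))"
          unfolding z_def by (intro sum.cong) auto
        hence "(\<Sum>i<Suc n. of_int (m i) * a j (z i)) = (\<Sum>i<n. of_int (m i) * a j (y i)) + of_int (m n) * a j g"
          unfolding z_def by simp
        also have "(\<Sum>i<n. of_int (m i) * a j (y i)) = (\<Sum>i<n. of_int (m i) * (if j = i then 1 else 0))"
          using ya(2) j by (intro sum.cong) auto
        also have "\<dots> = of_int (m j)" using delta_sum[OF j] .
        finally show ?thesis using m(2) j by simp
      qed
      have mn: "m n \<noteq> 0"
      proof
        assume mn0: "m n = 0"
        hence "m j = 0" if "j < n" for j using eq[OF that] by simp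
        hence "m i = 0" if "i < Suc n" for i using mn0 that less_Suc_eq by auto
        thus False using m(1) by blast
      qed
      have "of_int (m 0) + of_int (m n) * c = 0" using eq[OF n0] ag[OF n0] au[OF n0] by simp
      hence "c = - of_int (m 0) / of_int (m n)" using mn by (simp add: field_simps)
      thus ?thesis using \<sigma>c by (simp add: Rats_divide Rats_minus_iff)
    next
      case False
      hence qr: "quotient_rank_eq (infinitesimals P u0) (n + 1)" and fg': "quotient_fin_gen (infinitesimals P u0)"
        using assms(7) by auto
      show ?thesis
      proof (rule ccontr)
        assume cq: "\<sigma> g \<notin> \<rat>"
        hence cq': "c \<notin> \<rat>" using \<sigma>c by simp
        have n1: "1 < n" using assms(6) .
        have a1q: "a 1 x \<in> \<rat>" for x
        proof -
          define z where "z = (\<lambda>i. if i < n then y i else if i = n then g else x)"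
          have "\<not> indep_mod (infinitesimals P u0) (Suc (Suc n)) z" using qr unfolding quotient_rank_eq_def by simp
          then obtain m where m: "\<exists>i<Suc (Suc n). m i \<noteq> 0"
              "\<forall>j<n. (\<Sum>i<Suc (Suc n). of_int (m i) * a j (z i)) = 0"
            using rel by blast
          have eq: "of_int (m j) + of_int (m n) * a j g + of_int (m (Suc n)) * a j x = 0" if j: "j < n" for j
          proof -
            have "(\<Sum>i<n. of_int (m i) * a j (z i)) = (\<Sum>i<n. of_int (m i) * a j (y i))"
              unfolding z_def by (intro sum.cong) auto
            hence "(\<Sum>i<Suc (Suc n). of_int (m i) * a j (z i))
                = (\<Sum>i<n. of_int (m i) * a j (y i)) + of_int (m n) * a j g + of_int (m (Suc n)) * a j x"
              unfolding z_def by simp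
            also have "(\<Sum>i<n. of_int (m i) * a j (y i)) = (\<Sum>i<n. of_int (m i) * (if j = i then 1 else 0))"
              using ya(2) j by (intro sum.cong) auto
            also have "\<dots> = of_int (m j)" using delta_sum[OF j] .
            finally show ?thesis using m(2) j by simp
          qed
          have ms: "m (Suc n) \<noteq> 0"
          proof
            assume ms0: "m (Suc n) = 0"
            have e0: "of_int (m 0) + of_int (m n) * c = 0" using eq[OF n0] ag[OF n0] au[OF n0] ms0 by simp
            have mn0: "m n = 0"
            proof (rule ccontr)
              assume "m n \<noteq> 0"
              hence "c = - of_int (m 0) / of_int (m n)" using e0 by (simp add: field_simps)
              thus False using cq' by (simp add: Rats_divide Rats_minus_iff)
            qed
            have "m j = 0" if j: "j < n" for j
            proof -
              have "of_int (m j) + of_int (m n) * a j g = 0" using eq[OF j] ms0 by simp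
              thus ?thesis using mn0 by simp
            qed
            hence "m i = 0" if "i < Suc (Suc n)" for i using mn0 ms0 that less_Suc_eq by auto
            thus False using m(1) by blast
          qed
          have "a 1 g = 0" using ag[OF n1] au[OF n1] by simp
          hence "of_int (m 1) + of_int (m (Suc n)) * a 1 x = 0" using eq[OF n1] by simp
          hence "a 1 x = - of_int (m 1) / of_int (m (Suc n))" using ms by (simp add: field_simps)
          thus ?thesis by (simp add: Rats_divide Rats_minus_iff)
        qed
        obtain F where F: "finite F" "\<forall>x. \<exists>m::'g \<Rightarrow> int. x - (\<Sum>v\<in>F. zsmul (m v) v) \<in> infinitesimals P u0"
          using fg' unfolding quotient_fin_gen_def by blast
        obtain D :: int where D: "D > 0" "\<forall>v\<in>F. of_int D * a 1 v \<in> \<int>"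
          using common_denom[OF F(1), of "a 1"] a1q by blast
        have h1: "hom (a 1)" using ahom[OF n1] .
        have Dint: "of_int D * a 1 x \<in> \<int>" for x
        proof -
          obtain m :: "'g \<Rightarrow> int" where m: "x - (\<Sum>v\<in>F. zsmul (m v) v) \<in> infinitesimals P u0" using F(2) by blast
          have "a 1 (x - (\<Sum>v\<in>F. zsmul (m v) v)) = 0" using ainf[OF n1 m] .
          moreover have "a 1 (x - (\<Sum>v\<in>F. zsmul (m v) v)) = a 1 x - a 1 (\<Sum>v\<in>F. zsmul (m v) v)"
            by (rule hom_diff[OF h1])
          moreover have "a 1 (\<Sum>v\<in>F. zsmul (m v) v) = (\<Sum>v\<in>F. of_int (m v) * a 1 v)"
            by (simp only: hom_sum[OF h1] hom_zsmul[OF h1])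
          ultimately have "a 1 x = (\<Sum>v\<in>F. of_int (m v) * a 1 v)" by linarith
          hence "of_int D * a 1 x = (\<Sum>v\<in>F. of_int (m v) * (of_int D * a 1 v))"
            by (simp add: sum_distrib_left algebra_simps)
          also have "\<dots> \<in> \<int>"
          proof (rule Ints_sum)
            fix v assume "v \<in> F"
            hence "of_int D * a 1 v \<in> \<int>" using D(2) by blast
            thus "of_int (m v) * (of_int D * a 1 v) \<in> \<int>" using Ints_mult Ints_of_int by blast
          qed
          finally show ?thesis .
        qed
        obtain C where C: "a 1 = (\<lambda>x. \<Sum>i<n. C i * f i x)" using aC[OF n1] by blast
        define \<beta> where "\<beta> = (\<lambda>i. of_int D * C i)"
        have bint: "\<forall>x. (\<Sum>i<n. \<beta> i * f i x) \<in> \<int>"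
        proof
          fix x
          have "(\<Sum>i<n. \<beta> i * f i x) = of_int D * a 1 x" unfolding C \<beta>_def by (simp add: sum_distrib_left mult.assoc)
          thus "(\<Sum>i<n. \<beta> i * f i x) \<in> \<int>" using Dint by simp
        qed
        have "\<exists>i0<n. \<beta> i0 \<noteq> 0"
        proof (rule ccontr)
          assume "\<not> ?thesis"
          hence "\<forall>i<n. C i = 0" using D(1) unfolding \<beta>_def by simp
          hence "a 1 (y 1) = 0" unfolding C by simp
          moreover have "a 1 (y 1) = 1" using ya(2) n1 by simp
          ultimately show False by simp
        qed
        then obtain i0 where i0: "i0 < n" "\<beta> i0 \<noteq> 0" by blast
        show False using discrete_comb[OF assms(2) pt inj _ i0 bint] n1 by simp
      qed
    qed
  qed
qed

end
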